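(* Let $\Lambda=T_1\sqcup\cdots\sqcup T_m$ be a partition of $\Lambda$ into pairwise disjoint tilings $T_1,\dots,T_m$. Then for every $S\subseteq\{1,\dots,m\}$, the set $T_S=\bigcup_{s\in S}T_s$ is a tiling.
   Context: Fix an integer $n\ge 3$ and write $[n]=\{1,\dots,n\}$. Let $\Lambda$ be the set of 3-element subsets of $[n]$; a triple $\{i,j,k\}$ with $i<j<k$ is written $ijk$. For a 4-element subset $F=\{i<j<k<l\}$ of $[n]$, the stick of $F$ is the sequence $(ijk,\ ijl,\ ikl,\ jkl)$. A tiling (the inversion set of a rhombus tiling of the zonogon $Z(n;2)$) is a subset $T\subseteq\Lambda$ such that for every 4-element $F\subseteq[n]$, $T\cap\mathrm{stick}(F)$ is an initial segment or a final segment of the stick (empty set and whole stick allowed). *)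

theory Defs
  imports Main
begin

definition Lambda :: "nat \<Rightarrow> nat set set" where
  "Lambda n = {X. X \<subseteq> {1..n} \<and> card X = 3}"

text \<open>Stick of a 4-set F = {i<j<k<l}: the list (ijk, ijl, ikl, jkl).\<close>
definition stick :: "nat set \<Rightarrow> nat set list" where
  "stick F = (let xs = sorted_list_of_set F in
     [F - {xs ! 3}, F - {xs ! 2}, F - {xs ! 1}, F - {xs ! 0}])"

definition is_tiling :: "nat \<Rightarrow> nat set set \<Rightarrow> bool" where
  "is_tiling n T \<longleftrightarrow> T \<subseteq> Lambda n \<and>
     (\<forall>F. F \<subseteq> {1..n} \<and> card F = 4 \<longrightarrow>
        (\<exists>p\<le>4. filter (\<lambda>t. t \<in> T) (stick F) = take p (stick F)
               \<or> filter (\<lambda>t. t \<in> T) (stick F) = drop p (stick F)))"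

end

theory Submission imports Defs begin


definition mono4 :: "bool \<Rightarrow> bool \<Rightarrow> bool \<Rightarrow> bool \<Rightarrow> bool" where
 "mono4 x1 x2 x3 x4 \<longleftrightarrow> ((x2\<longrightarrow>x1)\<and>(x3\<longrightarrow>x2)\<and>(x4\<longrightarrow>x3)) \<or> ((x1\<longrightarrow>x2)\<and>(x2\<longrightarrow>x3)\<and>(x3\<longrightarrow>x4))"

lemma seg_imp:
  assumes "distinct [a,b,c,d]" "p \<le> 4"
    "filter P [a,b,c,d] = take p [a,b,c,d] \<or> filter P [a,b,c,d] = drop p [a,b,c,d]"
  shows "mono4 (P a) (P b) (P c) (P d)"
proof -
  have "p = 0 \<or> p = 1 \<or> p = 2 \<or> p = 3 \<or> p = 4" using assms(2) by auto
  then show ?thesis using assms(1,3) unfolding mono4_def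
    by (cases "P a"; cases "P b"; cases "P c"; cases "P d") (auto simp: numeral_eq_Suc)
qed

lemma seg_rev:
  assumes "mono4 (P a) (P b) (P c) (P d)"
  shows "\<exists>p\<le>4. filter P [a,b,c,d] = take p [a,b,c,d] \<or> filter P [a,b,c,d] = drop p [a,b,c,d]"
proof -
  have ex: "\<And>p. p \<le> 4 \<Longrightarrow> (filter P [a,b,c,d] = take p [a,b,c,d] \<or> filter P [a,b,c,d] = drop p [a,b,c,d]) \<Longrightarrow> ?thesis" by blast
  show ?thesis using assms unfolding mono4_def
    apply (cases "P a"; cases "P b"; cases "P c"; cases "P d")
    apply simp_all
    apply (((rule exI[of _ 0]; simp add: numeral_eq_Suc; fail) | (rule exI[of _ 1]; simp add: numeral_eq_Suc; fail) | (rule exI[of _ 2]; simp add: numeral_eq_Suc; fail) | (rule exI[of _ 3]; simp add: numeral_eq_Suc; fail) | (rule exI[of _ 4]; simp add: numeral_eq_Suc; fail)))+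
    done
qed

lemma combo:
  assumes "\<And>i. mono4 (oa = i) (ob = i) (oc = i) (od = (i::nat))"
  shows "mono4 (oa \<in> S) (ob \<in> S) (oc \<in> S) (od \<in> S)"
  using assms[of oa] assms[of ob] assms[of oc] assms[of od] unfolding mono4_def
  by (cases "oa \<in> S"; cases "ob \<in> S"; cases "oc \<in> S"; cases "od \<in> S") auto
lemma stick_props:
  assumes "F \<subseteq> {1..n}" "card F = 4"
  shows "\<exists>a b c d. stick F = [a,b,c,d] \<and> distinct [a,b,c,d] \<and> {a,b,c,d} \<subseteq> Lambda n"
proof -
  define xs where "xs = sorted_list_of_set F"
  have fin: "finite F" using assms(2) by (metis card.infinite zero_neq_numeral)
  have len: "length xs = 4" "distinct xs" "set xs = F" using fin assms(2) by (auto simp: xs_def)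
  obtain x0 x1 x2 x3 where xs: "xs = [x0,x1,x2,x3]"
  proof -
    have "xs = [xs!0,xs!1,xs!2,xs!3]"
      by (rule nth_equalityI) (use len(1) in \<open>auto simp: less_Suc_eq numeral_eq_Suc\<close>)
    then show ?thesis using that by blast
  qed
  have F: "F = {x0,x1,x2,x3}" and d: "distinct [x0,x1,x2,x3]" using len xs by auto
  have st: "stick F = [F - {x3}, F - {x2}, F - {x1}, F - {x0}]"
    unfolding stick_def xs_def[symmetric] xs by simp
  have e3: "F - {x3} = {x0,x1,x2}" and e2: "F - {x2} = {x0,x1,x3}" and e1: "F - {x1} = {x0,x2,x3}"
    and e0: "F - {x0} = {x1,x2,x3}" using d unfolding F by auto
  show ?thesis
  proof (intro exI conjI)
    show "stick F = [F - {x3}, F - {x2}, F - {x1}, F - {x0}]" by (rule st)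
    have x0F: "x0 \<in> F" and x1F: "x1 \<in> F" and x2F: "x2 \<in> F" and x3F: "x3 \<in> F" using F by auto
    have ne: "F - {x} \<noteq> F - {y}" if "y \<in> F" "x \<noteq> y" for x y using that by blast
    show "distinct [F - {x3}, F - {x2}, F - {x1}, F - {x0}]" 
      using d by (simp add: ne[OF x0F] ne[OF x1F] ne[OF x2F] ne[OF x3F])
    have "{x0,x1,x2,x3} \<subseteq> {1..n}" using assms(1) F by simp
    then show "{F - {x3}, F - {x2}, F - {x1}, F - {x0}} \<subseteq> Lambda n"
      using d unfolding Lambda_def e0 e1 e2 e3 by simp
  qed
qed
theorem lemma2:
  fixes n m :: nat and T :: "nat \<Rightarrow> nat set set"
  assumes "n \<ge> 3"
    and tiles: "\<And>i. i \<in> {1..m} \<Longrightarrow> is_tiling n (T i)"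
    and disj: "\<And>i j. i \<in> {1..m} \<Longrightarrow> j \<in> {1..m} \<Longrightarrow> i \<noteq> j \<Longrightarrow> T i \<inter> T j = {}"
    and cover: "(\<Union>i\<in>{1..m}. T i) = Lambda n"
    and "S \<subseteq> {1..m}"
  shows "is_tiling n (\<Union>s\<in>S. T s)"
  unfolding is_tiling_def
proof (intro conjI allI impI)
  show "(\<Union>s\<in>S. T s) \<subseteq> Lambda n" 
  proof -
    have "(\<Union>s\<in>S. T s) \<subseteq> (\<Union>i\<in>{1..m}. T i)" using assms(5) by (rule UN_mono) simp
    then show ?thesis using cover by simp
  qed
  fix F assume Fa: "F \<subseteq> {1..n} \<and> card F = 4"
  have "\<exists>a b c d. stick F = [a,b,c,d] \<and> distinct [a,b,c,d] \<and> {a,b,c,d} \<subseteq> Lambda n"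
    using Fa by (intro stick_props) (erule conjunct1, erule conjunct2)
  then obtain a b c d where P: "stick F = [a,b,c,d] \<and> distinct [a,b,c,d] \<and> {a,b,c,d} \<subseteq> Lambda n"
    by (elim exE)
  have L: "stick F = [a,b,c,d]" and dL: "distinct [a,b,c,d]" and inL: "{a,b,c,d} \<subseteq> Lambda n"
    using P by simp_all
  define own where "own x = (SOME i. i \<in> {1..m} \<and> x \<in> T i)" for x
  have own: "own x \<in> {1..m} \<and> x \<in> T (own x)" if "x \<in> Lambda n" for x
  proof -
    have "\<exists>i. i \<in> {1..m} \<and> x \<in> T i" using that cover by blast
    then show ?thesis unfolding own_def by (rule someI_ex)
  qed
  have memT: "x \<in> T i \<longleftrightarrow> own x = i" if "x \<in> Lambda n" "i \<in> {1..m}" for x i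
    using own[OF that(1)] disj[OF that(2), of "own x"] that(2) by blast
  have memU: "x \<in> (\<Union>s\<in>S. T s) \<longleftrightarrow> own x \<in> S" if "x \<in> Lambda n" for x
    using memT[OF that] assms(5) own[OF that] by blast
  have m4: "mono4 (own a = i) (own b = i) (own c = i) (own d = i)" for i
  proof (cases "i \<in> {1..m}")
    case True
    have "\<exists>p\<le>4. filter (\<lambda>t. t \<in> T i) (stick F) = take p (stick F) \<or> filter (\<lambda>t. t \<in> T i) (stick F) = drop p (stick F)"
      using tiles[OF True] Fa unfolding is_tiling_def by blast
    then obtain p where sg: "p \<le> 4"
      "filter (\<lambda>t. t \<in> T i) [a,b,c,d] = take p [a,b,c,d] \<or> filter (\<lambda>t. t \<in> T i) [a,b,c,d] = drop p [a,b,c,d]"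
      unfolding L by blast
    have eqs: "a \<in> T i \<longleftrightarrow> own a = i" "b \<in> T i \<longleftrightarrow> own b = i" "c \<in> T i \<longleftrightarrow> own c = i" "d \<in> T i \<longleftrightarrow> own d = i"
      using memT[OF _ True] inL by auto
    from seg_imp[OF dL sg] show ?thesis unfolding eqs .
  next
    case False
    have "own a \<noteq> i" "own b \<noteq> i" "own c \<noteq> i" "own d \<noteq> i"
      using False own inL by (metis insert_subset)+
    then show ?thesis unfolding mono4_def by simp
  qed
  have "mono4 (own a \<in> S) (own b \<in> S) (own c \<in> S) (own d \<in> S)" by (rule combo[OF m4])
  then have "mono4 ((\<lambda>t. t \<in> (\<Union>s\<in>S. T s)) a) ((\<lambda>t. t \<in> (\<Union>s\<in>S. T s)) b) ((\<lambda>t. t \<in> (\<Union>s\<in>S. T s)) c) ((\<lambda>t. t \<in> (\<Union>s\<in>S. T s)) d)"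
    using inL memU[of a] memU[of b] memU[of c] memU[of d] by simp
  from seg_rev[where P="\<lambda>t. t \<in> (\<Union>s\<in>S. T s)", OF this] show "\<exists>p\<le>4. filter (\<lambda>t. t \<in> (\<Union>s\<in>S. T s)) (stick F) = take p (stick F) \<or> filter (\<lambda>t. t \<in> (\<Union>s\<in>S. T s)) (stick F) = drop p (stick F)"
    unfolding L .
qed
end
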